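(* Let $G$ be a bipartite cactus graph with $n\ge 4$ vertices, $m$ edges and $b$ bridges. Then $m\le 2\left\lfloor \frac{2(n-1-b)}{3}\right\rfloor + b$.
   Context: A cactus graph is a connected simple graph in which every edge belongs to at most one cycle; a bi-cactus is a cactus that is also bipartite. A bridge is an edge whose removal disconnects the graph. *)

theory Defs
  imports Main
begin

definition simple_graph :: "'a set \<Rightarrow> 'a set set \<Rightarrow> bool" where
  "simple_graph V E \<longleftrightarrow> finite V \<and> (\<forall>e\<in>E. \<exists>u v. e = {u, v} \<and> u \<in> V \<and> v \<in> V \<and> u \<noteq> v)"

definition adj_rel :: "'a set set \<Rightarrow> ('a \<times> 'a) set" where
  "adj_rel E = {(u, v). {u, v} \<in> E}"

definition connected_graph :: "'a set \<Rightarrow> 'a set set \<Rightarrow> bool" where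
  "connected_graph V E \<longleftrightarrow> V \<noteq> {} \<and> (\<forall>u\<in>V. \<forall>v\<in>V. (u, v) \<in> (adj_rel E)\<^sup>*)"

definition is_cycle :: "'a set set \<Rightarrow> 'a set set \<Rightarrow> bool" where
  "is_cycle E C \<longleftrightarrow> (\<exists>vs. length vs \<ge> 3 \<and> distinct vs \<and>
     (\<forall>i < length vs. {vs ! i, vs ! ((i + 1) mod length vs)} \<in> E) \<and>
     C = {{vs ! i, vs ! ((i + 1) mod length vs)} | i. i < length vs})"

definition cactus :: "'a set \<Rightarrow> 'a set set \<Rightarrow> bool" where
  "cactus V E \<longleftrightarrow> simple_graph V E \<and> connected_graph V E \<and>
     (\<forall>e\<in>E. \<forall>C1 C2. is_cycle E C1 \<longrightarrow> is_cycle E C2 \<longrightarrow> e \<in> C1 \<longrightarrow> e \<in> C2 \<longrightarrow> C1 = C2)"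

definition bipartite :: "'a set \<Rightarrow> 'a set set \<Rightarrow> bool" where
  "bipartite V E \<longleftrightarrow> (\<exists>f :: 'a \<Rightarrow> bool. \<forall>u\<in>V. \<forall>v\<in>V. {u, v} \<in> E \<longrightarrow> f u \<noteq> f v)"

definition is_bridge :: "'a set \<Rightarrow> 'a set set \<Rightarrow> 'a set \<Rightarrow> bool" where
  "is_bridge V E e \<longleftrightarrow> e \<in> E \<and> \<not> connected_graph V (E - {e})"

definition bridges :: "'a set \<Rightarrow> 'a set set \<Rightarrow> 'a set set" where
  "bridges V E = {e \<in> E. is_bridge V E e}"

end

theory Submission
  imports Defs
begin

fun gpath :: "'a set set \<Rightarrow> 'a list \<Rightarrow> bool" where
  "gpath F [] = True"
| "gpath F [x] = True"
| "gpath F (x#y#xs) = ({x,y} \<in> F \<and> gpath F (y#xs))"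

lemma gpath_tl: "gpath F (x#xs) \<Longrightarrow> gpath F xs" by (cases xs) auto
lemma gpath_suffix: "gpath F (as @ bs) \<Longrightarrow> gpath F bs"
  by (induction as) (auto dest: gpath_tl)
lemma gpath_nth: "gpath F xs \<Longrightarrow> Suc i < length xs \<Longrightarrow> {xs!i, xs!Suc i} \<in> F"
  apply (induction F xs arbitrary: i rule: gpath.induct)
    apply auto
  apply (case_tac i)
   apply auto
  done

lemma adj_rel_iff[simp]: "(x,y) \<in> adj_rel F \<longleftrightarrow> {x,y} \<in> F" by (simp add: adj_rel_def)

lemma simple_path:
  assumes "(x,y) \<in> (adj_rel F)\<^sup>*"
  shows "\<exists>ps. gpath F ps \<and> distinct ps \<and> ps \<noteq> [] \<and> hd ps = x \<and> last ps = y"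
  using assms
proof (induction rule: converse_rtrancl_induct)
  case base then show ?case by (intro exI[of _ "[y]"]) auto
next
  case (step x x')
  then obtain ps where ps: "gpath F ps" "distinct ps" "ps \<noteq> []" "hd ps = x'" "last ps = y" by blast
  show ?case
  proof (cases "x \<in> set ps")
    case True
    then obtain as bs where "ps = as @ x # bs" by (meson split_list)
    then show ?thesis using ps by (intro exI[of _ "x#bs"]) (auto dest: gpath_suffix)
  next
    case False
    from ps obtain zs where "ps = x' # zs" by (cases ps) auto
    then show ?thesis using ps False step(1) by (intro exI[of _ "x#ps"]) auto
  qed
qed

lemma rt_sym: "(x,y) \<in> (adj_rel F)\<^sup>* \<Longrightarrow> (y,x) \<in> (adj_rel F)\<^sup>*"
proof (induction rule: rtrancl_induct)
  case base show ?case by simp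
next
  case (step y z)
  then have "(z,y) \<in> adj_rel F" by (simp add: insert_commute)
  with step show ?case by (meson converse_rtrancl_into_rtrancl)
qed

lemma mod_suc_lt: "i < L \<Longrightarrow> (Suc i) mod L = (if Suc i = L then 0 else Suc i)"
  by (cases "Suc i = L") auto

lemma make_cycle:
  assumes "(v,u) \<in> (adj_rel F)\<^sup>*" "u \<noteq> v" "{u,v} \<notin> F"
  shows "\<exists>C. is_cycle (insert {u,v} F) C \<and> {u,v} \<in> C"
proof -
  obtain ps where ps: "gpath F ps" "distinct ps" "ps \<noteq> []" "hd ps = v" "last ps = u"
    using simple_path[OF assms(1)] by blast
  define L where "L = length ps"
  have p0: "ps!0 = v" using ps by (simp add: hd_conv_nth)
  have pL: "ps!(L-1) = u" using ps by (simp add: last_conv_nth L_def)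
  have L2: "L \<ge> 2"
  proof (rule ccontr)
    assume "\<not> L \<ge> 2"
    moreover have "L \<noteq> 0" using ps(3) L_def by simp
    ultimately have "L = 1" by simp
    then show False using p0 pL assms(2) by simp
  qed
  have L3: "L \<ge> 3"
  proof (rule ccontr)
    assume "\<not> L \<ge> 3"
    then have "L = 2" using L2 by simp
    then have "{ps!0, ps!Suc 0} \<in> F" using gpath_nth[OF ps(1), of 0] L_def by simp
    moreover have "ps!Suc 0 = u" using pL \<open>L = 2\<close> by simp
    ultimately have "{v,u} \<in> F" using p0 by simp
    moreover have "{v,u} = {u,v}" by blast
    ultimately show False using assms(3) by simp
  qed
  have edges: "\<forall>i<L. {ps!i, ps!((i+1) mod L)} \<in> insert {u,v} F"
  proof (intro allI impI)
    fix i assume i: "i < L"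
    show "{ps!i, ps!((i+1) mod L)} \<in> insert {u,v} F"
    proof (cases "Suc i = L")
      case True
      then have "(i+1) mod L = 0" by simp
      moreover have "ps!i = u" using True pL by (metis diff_Suc_1)
      ultimately have "{ps!i, ps!((i+1) mod L)} = {u,v}" using p0 by simp
      then show ?thesis by simp
    next
      case False
      then have "(i+1) mod L = Suc i" using mod_suc_lt[OF i] by simp
      then show ?thesis using gpath_nth[OF ps(1), of i] False i L_def by simp
    qed
  qed
  let ?C = "{{ps!i, ps!((i+1) mod L)} | i. i < L}"
  have "is_cycle (insert {u,v} F) ?C" unfolding is_cycle_def
  proof (intro exI[of _ ps] conjI)
    show "3 \<le> length ps" using L3 L_def by simp
    show "distinct ps" using ps(2) .
    show "\<forall>i<length ps. {ps ! i, ps ! ((i + 1) mod length ps)} \<in> insert {u, v} F"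
      using edges L_def by simp
    show "?C = {{ps ! i, ps ! ((i + 1) mod length ps)} |i. i < length ps}" using L_def by simp
  qed
  moreover have "{u,v} \<in> ?C"
  proof -
    have "L - 1 < L" "(L - 1 + 1) mod L = 0" using L3 by auto
    then have "{ps!(L-1), ps!((L - 1 + 1) mod L)} \<in> ?C"
      by (intro CollectI exI[of _ "L-1"]) simp
    then show ?thesis using p0 pL \<open>(L - 1 + 1) mod L = 0\<close> by simp
  qed
  ultimately show ?thesis by (intro exI[of _ ?C] conjI)
qed

definition comps :: "'a set \<Rightarrow> 'a set set \<Rightarrow> nat" where
  "comps V E = card ((\<lambda>x. (adj_rel E)\<^sup>* `` {x}) ` V)"
definition cycs :: "'a set set \<Rightarrow> 'a set set set" where
  "cycs E = {C. is_cycle E C}"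

lemma cycle_sub: "is_cycle E C \<Longrightarrow> C \<subseteq> E" by (auto simp: is_cycle_def)
lemma cycle_mono: "is_cycle F C \<Longrightarrow> F \<subseteq> E \<Longrightarrow> is_cycle E C"
  unfolding is_cycle_def by blast
lemma finite_cycs: "finite E \<Longrightarrow> finite (cycs E)"
proof -
  assume "finite E"
  moreover have "cycs E \<subseteq> Pow E" using cycle_sub by (auto simp: cycs_def)
  ultimately show ?thesis by (meson finite_Pow_iff finite_subset)
qed

lemma adj_mono: "F \<subseteq> E \<Longrightarrow> (adj_rel F)\<^sup>* \<subseteq> (adj_rel E)\<^sup>*"
  by (rule rtrancl_mono) (auto simp: adj_rel_def)

lemma img_class: assumes "F \<subseteq> E" shows "(adj_rel E)\<^sup>* `` ((adj_rel F)\<^sup>* `` {x}) = (adj_rel E)\<^sup>* `` {x}"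
proof
  show "(adj_rel E)\<^sup>* `` ((adj_rel F)\<^sup>* `` {x}) \<subseteq> (adj_rel E)\<^sup>* `` {x}"
  proof
    fix z assume "z \<in> (adj_rel E)\<^sup>* `` ((adj_rel F)\<^sup>* `` {x})"
    then obtain y where y: "(x,y) \<in> (adj_rel F)\<^sup>*" "(y,z) \<in> (adj_rel E)\<^sup>*" by blast
    have "(x,y) \<in> (adj_rel E)\<^sup>*" using y(1) adj_mono[OF \<open>F \<subseteq> E\<close>] by blast
    then show "z \<in> (adj_rel E)\<^sup>* `` {x}" using y(2) by (meson Image_singleton_iff rtrancl_trans)
  qed
  show "(adj_rel E)\<^sup>* `` {x} \<subseteq> (adj_rel E)\<^sup>* `` ((adj_rel F)\<^sup>* `` {x})" by auto
qed

lemma comps_img: "F \<subseteq> E \<Longrightarrow> (\<lambda>x. (adj_rel E)\<^sup>* `` {x}) ` V =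
   (\<lambda>X. (adj_rel E)\<^sup>* `` X) ` ((\<lambda>x. (adj_rel F)\<^sup>* `` {x}) ` V)"
  by (simp add: image_image img_class)

lemma comps_le: "finite V \<Longrightarrow> F \<subseteq> E \<Longrightarrow> comps V E \<le> comps V F"
  unfolding comps_def by (simp only: comps_img) (rule card_image_le, simp)

lemma comps_lt:
  assumes "finite V" "F \<subseteq> E" "u \<in> V" "v \<in> V" "(u,v) \<in> (adj_rel E)\<^sup>*" "(u,v) \<notin> (adj_rel F)\<^sup>*"
  shows "comps V E < comps V F"
proof -
  let ?A = "(\<lambda>x. (adj_rel F)\<^sup>* `` {x}) ` V"
  let ?g = "\<lambda>X. (adj_rel E)\<^sup>* `` X"
  have fin: "finite ?A" using assms(1) by simp
  have "(adj_rel F)\<^sup>* `` {u} \<noteq> (adj_rel F)\<^sup>* `` {v}" using assms(6) by blast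
  moreover have "?g ((adj_rel F)\<^sup>* `` {u}) = ?g ((adj_rel F)\<^sup>* `` {v})"
    using img_class[OF assms(2)] assms(5) rt_sym[OF assms(5)] by (auto intro: rtrancl_trans)
  ultimately have "\<not> inj_on ?g ?A" using assms(3,4) unfolding inj_on_def by blast
  then have "card (?g ` ?A) \<noteq> card ?A" using inj_on_iff_eq_card[OF fin] by blast
  moreover have "card (?g ` ?A) \<le> card ?A" by (rule card_image_le[OF fin])
  ultimately show ?thesis unfolding comps_def by (subst comps_img[OF assms(2)]) linarith
qed

lemma main_count:
  "finite E \<Longrightarrow> finite V \<Longrightarrow> \<forall>e\<in>E. \<exists>u v. e = {u,v} \<and> u \<in> V \<and> v \<in> V \<and> u \<noteq> v
   \<Longrightarrow> card E + comps V E \<le> card V + card (cycs E)"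
proof (induction E rule: finite_induct)
  case empty
  have "adj_rel {} = {}" by (auto simp: adj_rel_def)
  then have "(adj_rel ({}::'a set set))\<^sup>* = Id" by (simp add: adj_rel_def)
  then have "comps V {} = card ((\<lambda>x. {x}) ` V)" by (simp add: comps_def)
  also have "\<dots> = card V" by (simp add: card_image)
  finally show ?case by simp
next
  case (insert e F)
  then obtain u v where e: "e = {u,v}" "u \<in> V" "v \<in> V" "u \<noteq> v" by blast
  have IH: "card F + comps V F \<le> card V + card (cycs F)" using insert by blast
  have cE: "card (insert e F) = Suc (card F)" using insert by simp
  have sub: "cycs F \<subseteq> cycs (insert e F)" unfolding cycs_def
  proof
    fix C assume "C \<in> {C. is_cycle F C}"
    then show "C \<in> {C. is_cycle (insert e F) C}" using cycle_mono[of F C "insert e F"] by auto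
  qed
  have finc: "finite (cycs (insert e F))" using finite_cycs insert by blast
  show ?case
  proof (cases "(v,u) \<in> (adj_rel F)\<^sup>*")
    case True
    have "{u,v} \<notin> F" using insert(2) e(1) by simp
    then have "\<exists>C. is_cycle (insert {u,v} F) C \<and> {u,v} \<in> C" by (rule make_cycle[OF True e(4)])
    then obtain C where C: "is_cycle (insert e F) C" "e \<in> C" unfolding e(1) by blast
    have "\<not> C \<subseteq> F" using C(2) insert(2) by blast
    then have "C \<notin> cycs F" using cycle_sub unfolding cycs_def by blast
    moreover have "C \<in> cycs (insert e F)" using C(1) unfolding cycs_def by simp
    ultimately have "cycs F \<subset> cycs (insert e F)" using sub by blast
    then have "card (cycs F) < card (cycs (insert e F))" using finc psubset_card_mono by blast
    moreover have "comps V (insert e F) \<le> comps V F" using comps_le[of V F "insert e F"] insert(4) by auto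
    ultimately show ?thesis using IH cE by linarith
  next
    case False
    have "{v,u} \<in> insert e F" using e(1) by blast
    then have "(v,u) \<in> (adj_rel (insert e F))\<^sup>*" by (simp add: r_into_rtrancl)
    then have "comps V (insert e F) < comps V F"
      using comps_lt[of V F "insert e F" v u] insert(4) e(2,3) False by blast
    moreover have "card (cycs F) \<le> card (cycs (insert e F))" using finc sub card_mono by blast
    ultimately show ?thesis using IH cE by linarith
  qed
qed


lemma edge_inj:
  assumes "distinct vs" "length vs \<ge> 3" "a < length vs" "j < length vs"
    "{vs!a, vs!((a+1) mod length vs)} = {vs!j, vs!((j+1) mod length vs)}"
  shows "a = j"
proof (rule ccontr)
  assume aj: "a \<noteq> j"
  define L where "L = length vs"
  have Lp: "0 < L" using assms(2) L_def by linarith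
  have ia: "(a+1) mod L < L" and ij: "(j+1) mod L < L" using Lp mod_less_divisor by blast+
  from assms(5) have "vs!a = vs!j \<or> (vs!a = vs!((j+1) mod L) \<and> vs!((a+1) mod L) = vs!j)"
    unfolding L_def by (auto simp: doubleton_eq_iff)
  then have "a = (j+1) mod L \<and> (a+1) mod L = j"
    using assms(1,3,4) ia ij aj L_def by (auto simp: nth_eq_iff_index_eq)
  then show False using assms(2,3,4) L_def mod_suc_lt[OF assms(3)] mod_suc_lt[OF assms(4)]
    by (auto split: if_splits)
qed

lemma cyc_conn:
  assumes "is_cycle E C" "e \<in> C" "connected_graph V E"
  shows "connected_graph V (E - {e})"
proof -
  obtain vs where vs: "length vs \<ge> 3" "distinct vs"
    "\<forall>i<length vs. {vs!i, vs!((i+1) mod length vs)} \<in> E"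
    "C = {{vs!i, vs!((i+1) mod length vs)} | i. i < length vs}"
    using assms(1) unfolding is_cycle_def by blast
  define L where "L = length vs"
  obtain j where j: "j < L" "e = {vs!j, vs!((j+1) mod L)}" using assms(2) vs(4) L_def by blast
  define f where "f t = vs!((j+1+t) mod L)" for t
  let ?R = "(adj_rel (E-{e}))\<^sup>*"
  have step: "(f t, f (Suc t)) \<in> adj_rel (E - {e})" if t: "t < L - 1" for t
  proof -
    define i where "i = (j+1+t) mod L"
    have Lp: "0 < L" using vs(1) L_def by linarith
    have iL: "i < L" unfolding i_def using Lp mod_less_divisor by blast
    have "i \<noteq> j"
    proof
      assume ij: "i = j"
      show False
      proof (cases "j+1+t < L")
        case True
        then have "i = j+1+t" by (simp add: i_def)
        then show False using ij by simp
      next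
        case False
        then have "i = (j+1+t - L) mod L" by (simp add: i_def le_mod_geq)
        also have "\<dots> = j+1+t - L" using j(1) t by simp
        finally show False using ij t j(1) False by simp
      qed
    qed
    have fi: "f t = vs!i" by (simp add: f_def i_def)
    have fs: "f (Suc t) = vs!((i+1) mod L)" by (simp add: f_def i_def mod_Suc_eq)
    have inE: "{vs!i, vs!((i+1) mod L)} \<in> E" using vs(3) iL L_def by simp
    have "{vs!i, vs!((i+1) mod L)} \<noteq> e"
      using edge_inj[OF vs(2) vs(1), of i j] iL j \<open>i \<noteq> j\<close> L_def by auto
    then show ?thesis using inE fi fs by simp
  qed
  have reach: "t \<le> L - 1 \<Longrightarrow> (f 0, f t) \<in> ?R" for t
  proof (induction t)
    case 0 show ?case by simp
  next
    case (Suc t)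
    then have "(f 0, f t) \<in> ?R" by simp
    moreover have "(f t, f (Suc t)) \<in> adj_rel (E - {e})" using step Suc.prems by simp
    ultimately show ?case by (rule rtrancl_into_rtrancl)
  qed
  have fL: "f (L-1) = vs!j"
  proof -
    have "j + 1 + (L - 1) = j + L" using vs(1) L_def by simp
    then show ?thesis using j(1) by (simp add: f_def)
  qed
  have f0: "f 0 = vs!((j+1) mod L)" by (simp add: f_def)
  have r1: "(vs!((j+1) mod L), vs!j) \<in> ?R" using reach[of "L-1"] fL f0 by simp
  have r2: "(vs!j, vs!((j+1) mod L)) \<in> ?R" using rt_sym[OF r1] .
  have sub: "adj_rel E \<subseteq> ?R"
  proof
    fix p assume "p \<in> adj_rel E"
    then obtain x y where p: "p = (x,y)" "{x,y} \<in> E" by (cases p) auto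
    show "p \<in> ?R"
    proof (cases "{x,y} = e")
      case True
      then have "(x = vs!j \<and> y = vs!((j+1) mod L)) \<or> (x = vs!((j+1) mod L) \<and> y = vs!j)"
        using j(2) by (auto simp: doubleton_eq_iff)
      then show ?thesis using r1 r2 p(1) by auto
    next
      case False
      then have "(x,y) \<in> adj_rel (E - {e})" using p(2) by simp
      then show ?thesis using p(1) by auto
    qed
  qed
  then have "(adj_rel E)\<^sup>* \<subseteq> ?R" by (rule rtrancl_subset_rtrancl)
  then show ?thesis using assms(3) unfolding connected_graph_def by blast
qed

lemma cyc_even:
  assumes "is_cycle E C" "bipartite V E" "\<forall>e\<in>E. \<exists>u v. e = {u,v} \<and> u \<in> V \<and> v \<in> V \<and> u \<noteq> v"
  shows "even (card C) \<and> card C \<ge> 4"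
proof -
  obtain vs where vs: "length vs \<ge> 3" "distinct vs"
    "\<forall>i<length vs. {vs!i, vs!((i+1) mod length vs)} \<in> E"
    "C = {{vs!i, vs!((i+1) mod length vs)} | i. i < length vs}"
    using assms(1) unfolding is_cycle_def by blast
  define L where "L = length vs"
  define g where "g i = {vs!i, vs!((i+1) mod L)}" for i
  have "C = g ` {..<L}" using vs(4) L_def g_def by auto
  moreover have "inj_on g {..<L}"
    unfolding inj_on_def g_def using edge_inj[OF vs(2) vs(1)] L_def by auto
  ultimately have cC: "card C = L" by (simp add: card_image)
  have inV: "vs!i \<in> V" if "i < L" for i
  proof -
    have "{vs!i, vs!((i+1) mod L)} \<in> E" using vs(3) that L_def by simp
    then obtain a b where "{vs!i, vs!((i+1) mod L)} = {a,b}" "a \<in> V" "b \<in> V" using assms(3) by blast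
    then show ?thesis by (auto simp: doubleton_eq_iff)
  qed
  obtain col :: "'a \<Rightarrow> bool" where col: "\<forall>u\<in>V. \<forall>v\<in>V. {u, v} \<in> E \<longrightarrow> col u \<noteq> col v"
    using assms(2) unfolding bipartite_def by blast
  have alt: "i < L \<Longrightarrow> col (vs!i) = (col (vs!0) = even i)" for i
  proof (induction i)
    case 0 show ?case by simp
  next
    case (Suc i)
    have "(i+1) mod L = Suc i" using Suc.prems by simp
    then have "{vs!i, vs!Suc i} \<in> E" using vs(3) Suc.prems L_def by (metis Suc_lessD)
    then have "col (vs!i) \<noteq> col (vs!Suc i)" using col inV Suc.prems by (meson Suc_lessD)
    then show ?case using Suc by auto
  qed
  have L0: "L - 1 < L" "Suc (L - 1) = L" using vs(1) L_def by auto
  have "(L - 1 + 1) mod L = 0" using L0 by simp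
  then have "{vs!(L-1), vs!0} \<in> E" using vs(3) L0 L_def by metis
  moreover have "vs!(L-1) \<in> V" "vs!0 \<in> V" using inV L0 by auto
  ultimately have "col (vs!(L-1)) \<noteq> col (vs!0)" using col by blast
  then have "odd (L - 1)" using alt[OF L0(1)] by auto
  then have "even L" using L0 by (metis even_Suc)
  then show ?thesis using cC vs(1) L_def by presburger
qed


theorem lemma4p8:
  fixes V :: "'a set" and E :: "'a set set"
  assumes "cactus V E" and "bipartite V E" and "card V \<ge> 4"
  shows "int (card E) \<le> 2 * ((2 * (int (card V) - 1 - int (card (bridges V E)))) div 3)
                          + int (card (bridges V E))"
proof -
  have sg: "simple_graph V E" and conn: "connected_graph V E"
    and cac: "\<forall>e\<in>E. \<forall>C1 C2. is_cycle E C1 \<longrightarrow> is_cycle E C2 \<longrightarrow> e \<in> C1 \<longrightarrow> e \<in> C2 \<longrightarrow> C1 = C2"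
    using assms(1) unfolding cactus_def by blast+
  have finV: "finite V" using sg unfolding simple_graph_def by (rule conjunct1)
  have hE: "\<forall>e\<in>E. \<exists>u v. e = {u,v} \<and> u \<in> V \<and> v \<in> V \<and> u \<noteq> v"
    using sg unfolding simple_graph_def by (rule conjunct2)
  have "E \<subseteq> Pow V"
  proof
    fix e assume "e \<in> E"
    then obtain u v where "e = {u,v}" "u \<in> V" "v \<in> V" using hE by meson
    then show "e \<in> Pow V" by simp
  qed
  then have finE: "finite E" using finV by (meson finite_Pow_iff finite_subset)
  have mc: "card E + comps V E \<le> card V + card (cycs E)" using main_count[OF finE finV hE] .
  have "V \<noteq> {}" using conn unfolding connected_graph_def by blast
  then have "comps V E \<ge> 1" unfolding comps_def using finV
    by (simp add: Suc_leI card_gt_0_iff)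
  with mc have m1: "card E + 1 \<le> card V + card (cycs E)" by linarith
  define U where "U = \<Union>(cycs E)"
  have finc: "finite (cycs E)" using finite_cycs finE by blast
  have cE: "C \<subseteq> E" if "C \<in> cycs E" for C using that cycle_sub unfolding cycs_def by blast
  have UE: "U \<subseteq> E" unfolding U_def using cE by blast
  have disj: "pairwise disjnt (cycs E)"
  proof (rule pairwiseI)
    fix C1 C2 assume "C1 \<in> cycs E" "C2 \<in> cycs E" "C1 \<noteq> C2"
    then show "disjnt C1 C2" unfolding disjnt_def using cac cE unfolding cycs_def by blast
  qed
  have cardU: "card U = sum card (cycs E)" unfolding U_def
    by (rule card_Union_disjoint[OF disj]) (meson cE finE finite_subset)
  have ev: "even (card C) \<and> card C \<ge> 4" if "C \<in> cycs E" for C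
    using cyc_even[of E C V] that assms(2) hE unfolding cycs_def by blast
  have "sum (\<lambda>_. 4) (cycs E) \<le> sum card (cycs E)" by (rule sum_mono) (use ev in blast)
  then have U4: "4 * card (cycs E) \<le> card U" using cardU by simp
  have Uev: "even (card U)" using cardU ev by (simp add: dvd_sum)
  have br: "bridges V E = E - U"
  proof
    show "bridges V E \<subseteq> E - U"
    proof
      fix e assume "e \<in> bridges V E"
      then have e: "e \<in> E" "\<not> connected_graph V (E - {e})"
        unfolding bridges_def is_bridge_def by auto
      have "e \<notin> U"
      proof
        assume "e \<in> U"
        then obtain C where "C \<in> cycs E" "e \<in> C" unfolding U_def by blast
        then have "connected_graph V (E - {e})" using cyc_conn conn unfolding cycs_def by blast
        then show False using e by blast
      qed
      then show "e \<in> E - U" using e by blast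
    qed
    show "E - U \<subseteq> bridges V E"
    proof
      fix e assume e: "e \<in> E - U"
      obtain u v where uv: "e = {u,v}" "u \<in> V" "v \<in> V" "u \<noteq> v" using hE e by blast
      have "connected_graph V (E - {e}) \<Longrightarrow> False"
      proof -
        assume "connected_graph V (E - {e})"
        then have r: "(v,u) \<in> (adj_rel (E - {e}))\<^sup>*" using uv unfolding connected_graph_def by blast
        have "{u,v} \<notin> E - {e}" using uv by simp
        then have "\<exists>C. is_cycle (insert {u,v} (E - {e})) C \<and> {u,v} \<in> C"
          by (rule make_cycle[OF r uv(4)])
        moreover have "insert {u,v} (E - {e}) = E" using uv(1) e by blast
        ultimately obtain C where "is_cycle E C" "e \<in> C" using uv(1) by auto
        then have "e \<in> U" unfolding U_def cycs_def by blast
        then show False using e by blast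
      qed
      then show "e \<in> bridges V E" using e unfolding bridges_def is_bridge_def by blast
    qed
  qed
  have finU: "finite U" using UE finE by (rule finite_subset)
  have cb: "card (bridges V E) = card E - card U" using br UE finU by (simp add: card_Diff_subset)
  have UleE: "card U \<le> card E" using UE finE card_mono by blast
  obtain q where q: "card U = 2 * q" using Uev by blast
  define m where "m = int (card E)"
  define n where "n = int (card V)"
  define c where "c = int (card (cycs E))"
  define p where "p = int (card U)"
  have b: "int (card (bridges V E)) = m - p" using cb UleE by (simp add: m_def p_def)
  have h1: "m + 1 \<le> n + c" using m1 by (simp add: m_def n_def c_def)
  have h2: "4 * c \<le> p" using U4 by (simp add: c_def p_def)
  have h3: "p = 2 * int q" using q by (simp add: p_def)
  have "m \<le> 2 * ((2 * (n - 1 - (m - p))) div 3) + (m - p)"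
  proof -
    define k where "k = n - 1 - (m - p)"
    have "3 * int q \<le> 2 * k" using h1 h2 h3 unfolding k_def by (smt (verit))
    then have "(3 * int q) div 3 \<le> (2 * k) div 3" by (rule zdiv_mono1) simp
    then have "int q \<le> (2 * k) div 3" by simp
    then show ?thesis using h3 unfolding k_def by linarith
  qed
  then show ?thesis using b by (simp add: m_def n_def)
qed

end
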